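(* Let $f:\mathbb{N}_+\to\mathbb{N}_+$ be strictly increasing and let $g:\mathbb{R}_{\ge0}\to\mathbb{R}_{\ge0}$ be continuous and bijective with $g(n)=f(n)$ for all $n\in\mathbb{N}_+$. Then $L_{\mathbb{N}_+}(f)^{-1}\in\Theta(g^{-1})$.
   Context: For $h:\mathbb{N}_+\to\mathbb{N}_+$, the linear interpolation $L_{\mathbb{N}_+}(h):\mathbb{R}_{\ge0}\to\mathbb{R}_{\ge0}$ is the polygonal chain starting at $(0,0)$ and passing through the points $(n,h(n))$, $n\in\mathbb{N}_+$, in increasing order of $n$. $\Theta$ denotes asymptotic equivalence up to constant factors as $x\to\infty$. *)

theory Defs
  imports "HOL-Analysis.Analysis" "HOL-Library.Landau_Symbols"
begin

text \<open>Value of h at n, with the convention that the chain starts at (0,0):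
  only the values h n for n >= 1 are used.\<close>
definition interp_pt :: "(nat \<Rightarrow> nat) \<Rightarrow> nat \<Rightarrow> real" where
  "interp_pt h n = (if n = 0 then 0 else real (h n))"

text \<open>Linear interpolation L_{N+}(h): the polygonal chain through (0,0), (1,h 1), (2,h 2), ...
  (meaningful for x >= 0).\<close>
definition lin_interp :: "(nat \<Rightarrow> nat) \<Rightarrow> real \<Rightarrow> real" where
  "lin_interp h x =
     (let n = nat \<lfloor>x\<rfloor>
      in interp_pt h n + (x - real n) * (interp_pt h (Suc n) - interp_pt h n))"

end

theory Submission
  imports Defs
begin

lemma p_mono:
  assumes f_pos: "\<And>n. n \<ge> 1 \<Longrightarrow> f n \<ge> 1"
    and f_mono: "strict_mono_on {1..} f"
  shows "m < n \<Longrightarrow> interp_pt f m < interp_pt f n"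
proof (induction n)
  case 0 then show ?case by simp
next
  case (Suc n)
  have step: "interp_pt f n < interp_pt f (Suc n)"
  proof (cases "n = 0")
    case True then show ?thesis using f_pos[of 1] by (simp add: interp_pt_def)
  next
    case False
    then have "f n < f (Suc n)" using f_mono by (auto simp: strict_mono_on_def)
    then show ?thesis using False by (simp add: interp_pt_def)
  qed
  show ?case
  proof (cases "m = n")
    case True then show ?thesis using step by simp
  next
    case False then have "m < n" using Suc.prems by simp
    then show ?thesis using Suc.IH step by simp
  qed
qed

lemma p_ge:
  assumes f_pos: "\<And>n. n \<ge> 1 \<Longrightarrow> f n \<ge> 1"
    and f_mono: "strict_mono_on {1..} f"
  shows "interp_pt f n \<ge> real n"
proof (induction n)
  case 0 then show ?case by (simp add: interp_pt_def)
next
  case (Suc n)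
  have "interp_pt f n < interp_pt f (Suc n)" using p_mono[OF assms] by simp
  moreover have "interp_pt f n = real (f n) \<or> n = 0" by (simp add: interp_pt_def)
  moreover have "interp_pt f (Suc n) = real (f (Suc n))" by (simp add: interp_pt_def)
  ultimately have "f n < f (Suc n) \<or> n = 0" by auto
  then show ?case using Suc.IH f_pos[of "Suc n"]
    by (auto simp: interp_pt_def split: if_splits)
qed

lemma L_nat: "lin_interp f (real n) = interp_pt f n"
  by (simp add: lin_interp_def)

lemma L_bounds:
  assumes f_pos: "\<And>n. n \<ge> 1 \<Longrightarrow> f n \<ge> 1"
    and f_mono: "strict_mono_on {1..} f"
    and x: "x \<ge> 0"
  shows "interp_pt f (nat \<lfloor>x\<rfloor>) \<le> lin_interp f x \<and> lin_interp f x < interp_pt f (Suc (nat \<lfloor>x\<rfloor>))"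
proof -
  define n where "n = nat \<lfloor>x\<rfloor>"
  have n1: "real n \<le> x" "x < real n + 1" using x unfolding n_def by linarith+
  have d: "interp_pt f n < interp_pt f (Suc n)" using p_mono[OF f_pos f_mono] by simp
  have L: "lin_interp f x = interp_pt f n + (x - real n) * (interp_pt f (Suc n) - interp_pt f n)"
    by (simp add: lin_interp_def n_def Let_def)
  have "0 \<le> (x - real n) * (interp_pt f (Suc n) - interp_pt f n)" using n1 d by simp
  moreover have "(x - real n) * (interp_pt f (Suc n) - interp_pt f n) < 1 * (interp_pt f (Suc n) - interp_pt f n)"
    using n1 d by (intro mult_strict_right_mono) auto
  ultimately show ?thesis using L unfolding n_def[symmetric] by simp
qed

lemma L_strict:
  assumes f_pos: "\<And>n. n \<ge> 1 \<Longrightarrow> f n \<ge> 1"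
    and f_mono: "strict_mono_on {1..} f"
    and x: "0 \<le> x" and xy: "x < y"
  shows "lin_interp f x < lin_interp f y"
proof (cases "nat \<lfloor>x\<rfloor> = nat \<lfloor>y\<rfloor>")
  case True
  define n where "n = nat \<lfloor>x\<rfloor>"
  have d: "interp_pt f n < interp_pt f (Suc n)" using p_mono[OF f_pos f_mono] by simp
  have Lx: "lin_interp f x = interp_pt f n + (x - real n) * (interp_pt f (Suc n) - interp_pt f n)"
    by (simp add: lin_interp_def n_def Let_def)
  have Ly: "lin_interp f y = interp_pt f n + (y - real n) * (interp_pt f (Suc n) - interp_pt f n)"
    using True by (simp add: lin_interp_def n_def Let_def)
  have "(x - real n) * (interp_pt f (Suc n) - interp_pt f n) < (y - real n) * (interp_pt f (Suc n) - interp_pt f n)"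
    using xy d by (intro mult_strict_right_mono) auto
  then show ?thesis using Lx Ly by simp
next
  case False
  then have lt: "Suc (nat \<lfloor>x\<rfloor>) \<le> nat \<lfloor>y\<rfloor>" using xy x
    by (metis floor_mono less_eq_real_def nat_mono not_less_eq_eq order_antisym_conv)
  have "lin_interp f x < interp_pt f (Suc (nat \<lfloor>x\<rfloor>))" using L_bounds[OF f_pos f_mono x] by simp
  also have "\<dots> \<le> interp_pt f (nat \<lfloor>y\<rfloor>)"
    using lt p_mono[OF f_pos f_mono, of "Suc (nat \<lfloor>x\<rfloor>)" "nat \<lfloor>y\<rfloor>"]
    by (cases "Suc (nat \<lfloor>x\<rfloor>) = nat \<lfloor>y\<rfloor>") auto
  also have "\<dots> \<le> lin_interp f y" using L_bounds[OF f_pos f_mono, of y] x xy by simp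
  finally show ?thesis .
qed

lemma L_surj:
  assumes f_pos: "\<And>n. n \<ge> 1 \<Longrightarrow> f n \<ge> 1"
    and f_mono: "strict_mono_on {1..} f"
    and y: "y \<ge> 0"
  shows "y \<in> lin_interp f ` {0..}"
proof -
  have ex: "\<exists>k. y < interp_pt f k"
    using p_ge[OF f_pos f_mono, of "nat \<lceil>y\<rceil> + 1"] by (intro exI[of _ "nat \<lceil>y\<rceil> + 1"]) linarith
  define k where "k = (LEAST k. y < interp_pt f k)"
  have yk: "y < interp_pt f k" unfolding k_def using LeastI_ex[OF ex] .
  have k0: "k \<noteq> 0" using yk y by (auto simp: interp_pt_def split: if_splits)
  then obtain n where kn: "k = Suc n" by (cases k) auto
  have yn: "interp_pt f n \<le> y" using not_less_Least[of n "\<lambda>k. y < interp_pt f k"] kn k_def by force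
  have d: "interp_pt f n < interp_pt f (Suc n)" using p_mono[OF f_pos f_mono] by simp
  define t where "t = (y - interp_pt f n) / (interp_pt f (Suc n) - interp_pt f n)"
  have t0: "0 \<le> t" using yn d by (simp add: t_def)
  have t1: "t < 1" using yk kn d by (simp add: t_def)
  have fl: "nat \<lfloor>real n + t\<rfloor> = n" using t0 t1 by linarith
  have "lin_interp f (real n + t) = y"
    using fl d by (simp add: lin_interp_def Let_def t_def)
  moreover have "real n + t \<ge> 0" using t0 by simp
  ultimately show ?thesis by force
qed

theorem lemma3:
  fixes f :: "nat \<Rightarrow> nat" and g :: "real \<Rightarrow> real"
  assumes f_pos: "\<And>n. n \<ge> 1 \<Longrightarrow> f n \<ge> 1"
    and f_mono: "strict_mono_on {1..} f"
    and g_cont: "continuous_on {0..} g"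
    and g_bij: "bij_betw g {0..} {0..}"
    and g_f: "\<And>n. n \<ge> 1 \<Longrightarrow> g (real n) = real (f n)"
  shows "inv_into {0..} (lin_interp f) \<in> \<Theta>[at_top](inv_into {0..} g)"
proof -
  have "inj_on g {0..}" using g_bij bij_betw_def by blast
  then have "strict_mono_on {0..} g \<or> strict_antimono_on {0..} g"
    using injective_eq_monotone_map[OF _ g_cont] by (simp add: is_interval_ci)
  moreover have "g 1 < g 2" using g_f[of 1] g_f[of 2] f_mono
    by (simp add: strict_mono_on_def)
  ultimately have gm: "strict_mono_on {0..} g"
  proof (elim disjE)
    assume "strict_antimono_on {0..} g" "g 1 < g 2"
    then have "g 2 < g 1" by (auto simp: monotone_on_def)
    then show ?thesis using \<open>g 1 < g 2\<close> by simp
  qed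
  define A where "A = inv_into {0..} (lin_interp f)"
  define B where "B = inv_into {0..} g"
  have key: "1 \<le> A y \<and> 1 \<le> B y \<and> A y \<le> B y + 1 \<and> B y \<le> A y + 1" if y: "y \<ge> real (f 1)" for y
  proof -
    have y0: "y \<ge> 0" using y by simp
    have yL: "y \<in> lin_interp f ` {0..}" using L_surj[OF f_pos f_mono y0] .
    have yg: "y \<in> g ` {0..}" using g_bij y0 by (simp add: bij_betw_def)
    have a0: "A y \<ge> 0" "lin_interp f (A y) = y" unfolding A_def
      using inv_into_into[OF yL] f_inv_into_f[OF yL] by auto
    have b0: "B y \<ge> 0" "g (B y) = y" unfolding B_def
      using inv_into_into[OF yg] f_inv_into_f[OF yg] by auto
    have L1: "lin_interp f 1 = real (f 1)" using L_nat[of f 1] by (simp add: interp_pt_def)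
    have "A y \<ge> 1"
    proof (rule ccontr)
      assume "\<not> ?thesis"
      then have "lin_interp f (A y) < lin_interp f 1" using L_strict[OF f_pos f_mono a0(1)] by simp
      then show False using a0 L1 y by simp
    qed
    moreover have "B y \<ge> 1"
    proof (rule ccontr)
      assume "\<not> ?thesis"
      then have "g (B y) < g 1" using gm b0(1) by (simp add: strict_mono_on_def)
      then show False using b0 g_f[of 1] y by simp
    qed
    moreover have "A y \<le> B y + 1"
    proof (rule ccontr)
      assume c: "\<not> ?thesis"
      define m where "m = Suc (nat \<lfloor>B y\<rfloor>)"
      have m: "B y < real m" "real m < A y" "m \<ge> 1" using c b0(1) unfolding m_def by linarith+
      have "g (B y) < g (real m)" using gm m b0(1) by (simp add: strict_mono_on_def)
      also have "\<dots> = lin_interp f (real m)" using g_f[OF m(3)] L_nat[of f m] m(3) by (simp add: interp_pt_def)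
      also have "\<dots> < lin_interp f (A y)" using L_strict[OF f_pos f_mono _ m(2)] by simp
      finally show False using a0 b0 by simp
    qed
    moreover have "B y \<le> A y + 1"
    proof (rule ccontr)
      assume c: "\<not> ?thesis"
      define m where "m = Suc (nat \<lfloor>A y\<rfloor>)"
      have m: "A y < real m" "real m < B y" "m \<ge> 1" using c a0(1) unfolding m_def by linarith+
      have "lin_interp f (A y) < lin_interp f (real m)" using L_strict[OF f_pos f_mono a0(1) m(1)] by simp
      also have "\<dots> = g (real m)" using g_f[OF m(3)] L_nat[of f m] m(3) by (simp add: interp_pt_def)
      also have "\<dots> < g (B y)" using gm m by (simp add: strict_mono_on_def)
      finally show False using a0 b0 by simp
    qed
    ultimately show ?thesis by blast
  qed
  have ev: "eventually (\<lambda>y. y \<ge> real (f 1)) at_top" by (rule eventually_ge_at_top)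
  have o1: "A \<in> O[at_top](B)"
    by (rule bigoI[where c=2], rule eventually_mono[OF ev], drule key, simp)
  have o2: "B \<in> O[at_top](A)"
    by (rule bigoI[where c=2], rule eventually_mono[OF ev], drule key, simp)
  show ?thesis unfolding A_def[symmetric] B_def[symmetric]
    using o1 o2 by (simp add: bigtheta_def bigomega_iff_bigo)
qed

end
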